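(* Let $\nu>0$, let $U$ be the gamma process with parameter $\nu$ and $V(t)=\inf\{\tau\ge0: U(\tau)>t\}$. For every fixed $t>0$, $$\mathbb{P}(V(t)>x)\sim \left(\frac{2\pi x}{\nu}\right)^{-1/2} e^{x/\nu-t}\left(\frac{\nu t}{x}\right)^{x/\nu}\quad\text{as } x\to\infty .$$
   Context: The gamma process with parameter $\nu>0$ is the Lévy process $\{U(t),t\ge0\}$ with $U(0)=0$, stationary independent increments, and $U(t)$ having density $f(x,t)=\frac{1}{\Gamma(t/\nu)}x^{t/\nu-1}e^{-x}$, $x>0$. The inverse gamma process is $V(t)=\inf\{\tau\ge 0: U(\tau)>t\}$. Here $a(x)\sim b(x)$ means $a(x)/b(x)\to1$. *)

theory Defs
  imports "HOL-Probability.Probability"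
begin

definition gamma_proc_density :: "real \<Rightarrow> real \<Rightarrow> real \<Rightarrow> real" where
  "gamma_proc_density nu t x =
     (if x > 0 then x powr (t / nu - 1) * exp (- x) / Gamma (t / nu) else 0)"

definition gamma_process :: "'a measure \<Rightarrow> real \<Rightarrow> (real \<Rightarrow> 'a \<Rightarrow> real) \<Rightarrow> bool" where
  "gamma_process M nu U \<longleftrightarrow>
     prob_space M \<and> nu > 0 \<and>
     (\<forall>t. U t \<in> borel_measurable M) \<and>
     (AE \<omega> in M. U 0 \<omega> = 0) \<and>
     (\<forall>\<omega>\<in>space M. \<forall>s\<ge>0. continuous (at_right s) (\<lambda>\<tau>. U \<tau> \<omega>)) \<and>
     (\<forall>\<omega>\<in>space M. \<forall>s>0. \<exists>l. ((\<lambda>\<tau>. U \<tau> \<omega>) \<longlongrightarrow> l) (at_left s)) \<and>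
     (\<forall>(n::nat) (ts::nat \<Rightarrow> real). 0 \<le> ts 0 \<longrightarrow> (\<forall>i<n. ts i < ts (Suc i)) \<longrightarrow>
        prob_space.indep_vars M (\<lambda>_. borel) (\<lambda>i \<omega>. U (ts (Suc i)) \<omega> - U (ts i) \<omega>) {..<n}) \<and>
     (\<forall>s\<ge>0. \<forall>h\<ge>0. distr M borel (\<lambda>\<omega>. U (s + h) \<omega> - U s \<omega>) = distr M borel (U h)) \<and>
     (\<forall>t>0. distributed M lborel (U t) (\<lambda>x. ennreal (gamma_proc_density nu t x)))"

definition inverse_process :: "(real \<Rightarrow> 'a \<Rightarrow> real) \<Rightarrow> real \<Rightarrow> 'a \<Rightarrow> real" where
  "inverse_process U t \<omega> = Inf {\<tau>. \<tau> \<ge> 0 \<and> U \<tau> \<omega> > t}"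

end

theory Submission
  imports Defs "HOL-Real_Asymp.Real_Asymp"
begin


lemma ln_lower_pade:
  fixes x :: real assumes "x \<ge> 0"
  shows "2*x/(2+x) \<le> ln (1+x)"
proof -
  let ?f = "\<lambda>y::real. ln (1+y) - 2*y/(2+y)"
  have "?f 0 \<le> ?f x"
  proof (rule DERIV_nonneg_imp_increasing_open[OF assms])
    fix y :: real assume y: "0 < y" "y < x"
    have "DERIV ?f y :> (1/(1+y) - (2*(2+y) - 2*y)/(2+y)^2)"
      using y by (auto intro!: derivative_eq_intros simp: power2_eq_square)
    moreover have "1/(1+y) - (2*(2+y) - 2*y)/(2+y)^2 = y^2/((1+y)*(2+y)^2)"
      using y by (simp add: divide_simps power2_eq_square) algebra
    moreover have "y^2/((1+y)*(2+y)^2) \<ge> 0" using y by simp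
    ultimately show "\<exists>d. DERIV ?f y :> d \<and> d \<ge> 0" by auto
  next
    show "continuous_on {0..x} ?f"
      by (intro continuous_intros) auto
  qed
  then show ?thesis by simp
qed

lemma ln_upper_pade:
  fixes x :: real assumes "x \<ge> 0"
  shows "ln (1+x) \<le> x*(2+x)/(2*(1+x))"
proof -
  let ?f = "\<lambda>y::real. y*(2+y)/(2*(1+y)) - ln (1+y)"
  have "?f 0 \<le> ?f x"
  proof (rule DERIV_nonneg_imp_increasing_open[OF assms])
    fix y :: real assume y: "0 < y" "y < x"
    have "DERIV ?f y :> (((1*(2+y) + y*1) * (2*(1+y)) - y*(2+y)*2)/(2*(1+y))^2 - 1/(1+y))"
      using y by (auto intro!: derivative_eq_intros simp: power2_eq_square)
    moreover have "((1*(2+y) + y*1) * (2*(1+y)) - y*(2+y)*2)/(2*(1+y))^2 - 1/(1+y) = y^2/(2*(1+y)^2)"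
      using y by (simp add: divide_simps power2_eq_square) algebra
    moreover have "y^2/(2*(1+y)^2) \<ge> 0" using y by simp
    ultimately show "\<exists>d. DERIV ?f y :> d \<and> d \<ge> 0" by auto
  next
    show "continuous_on {0..x} ?f"
      by (intro continuous_intros) auto
  qed
  then show ?thesis by simp
qed

definition sfun :: "real \<Rightarrow> real" where
  "sfun a = ln (Gamma (a+1)) - (a + 1/2) * ln a + a"

lemma sfun_diff:
  assumes "a > 0"
  shows "sfun a - sfun (a+1) = (a + 1/2) * ln (1 + 1/a) - 1"
proof -
  have "Gamma (a + 1 + 1) = (a+1) * Gamma (a+1)"
    by (rule Gamma_plus1) (use assms in \<open>auto elim!: nonpos_Ints_cases\<close>)
  then have "ln (Gamma (a+1+1)) = ln (a+1) + ln (Gamma (a+1))"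
  proof -
    have g: "Gamma (a+1) > 0" using assms by (intro Gamma_real_pos) simp
    have "ln ((a+1) * Gamma (a+1)) = ln (a+1) + ln (Gamma (a+1))"
      using assms g by (intro ln_mult_pos) auto
    then show ?thesis using \<open>Gamma (a + 1 + 1) = (a+1) * Gamma (a+1)\<close> by simp
  qed
  moreover have "ln (1 + 1/a) = ln (a+1) - ln a"
  proof -
    have "1 + 1/a = (a+1)/a" using assms by (simp add: field_simps)
    then show ?thesis using assms by (simp add: ln_div)
  qed
  moreover have "(a+1+1/2) * ln (a+1) = ln (a+1) + (a+1/2)*ln a + (a+1/2) * ln (1+1/a)"
    by (simp add: \<open>ln (1 + 1/a) = ln (a+1) - ln a\<close> algebra_simps)
  ultimately show ?thesis
    unfolding sfun_def by (simp add: add.assoc)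
qed

lemma sfun_diff_bounds:
  assumes "a > 0"
  shows "0 \<le> sfun a - sfun (a+1)" "sfun a - sfun (a+1) \<le> 1/(4*a) - 1/(4*(a+1))"
proof -
  have x: "1/a \<ge> 0" using assms by simp
  have "(a + 1/2) * (2*(1/a)/(2+1/a)) = 1"
    using assms by (simp add: field_simps)
  moreover have "(a + 1/2) * (2*(1/a)/(2+1/a)) \<le> (a + 1/2) * ln (1 + 1/a)"
    using ln_lower_pade[OF x] assms by (intro mult_left_mono) auto
  ultimately show "0 \<le> sfun a - sfun (a+1)" using sfun_diff[OF assms] by linarith
  have "(a + 1/2) * ln (1 + 1/a) \<le> (a + 1/2) * ((1/a)*(2+1/a)/(2*(1+1/a)))"
    using ln_upper_pade[OF x] assms by (intro mult_left_mono) auto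
  moreover have "(a + 1/2) * ((1/a)*(2+1/a)/(2*(1+1/a))) = 1 + (1/(4*a) - 1/(4*(a+1)))"
    using assms by (simp add: divide_simps) algebra
  ultimately show "sfun a - sfun (a+1) \<le> 1/(4*a) - 1/(4*(a+1))" using sfun_diff[OF assms] by simp
qed



definition Cst :: "real \<Rightarrow> real" where
  "Cst b = lim (\<lambda>n. sfun (b + real n))"

lemma sfun_seq:
  assumes b: "b > 0"
  shows "(\<lambda>n. sfun (b + real n)) \<longlonglongrightarrow> Cst b"
    and "\<And>n. 0 \<le> sfun (b + real n) - Cst b"
    and "\<And>n. sfun (b + real n) - Cst b \<le> 1/(4*(b + real n))"
proof -
  define u where "u n = sfun (b + real n)" for n
  define w where "w n = u n - 1/(4*(b + real n))" for n
  have step: "sfun (b + real (Suc n)) = sfun ((b + real n) + 1)" for n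
    by (simp add: algebra_simps)
  have dec: "decseq u"
  proof (rule decseq_SucI)
    fix n
    show "u (Suc n) \<le> u n"
      using sfun_diff_bounds(1)[of "b + real n"] b unfolding u_def step by simp
  qed
  have inc: "incseq w"
  proof (rule incseq_SucI)
    fix n
    have "1/(4*(b + real (Suc n))) = 1/(4*((b + real n) + 1))" by (simp add: add.assoc)
    then show "w n \<le> w (Suc n)"
      using sfun_diff_bounds(2)[of "b + real n"] b unfolding w_def u_def step by linarith
  qed
  have lb: "\<forall>i. w 0 \<le> u i"
  proof
    fix i
    have "w 0 \<le> w i" using inc by (simp add: incseq_def)
    also have "w i \<le> u i" unfolding w_def using b by simp
    finally show "w 0 \<le> u i" .
  qed
  obtain L where L: "u \<longlonglongrightarrow> L" "\<forall>i. L \<le> u i"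
    using decseq_convergent[OF dec lb] by blast
  have z: "(\<lambda>n. 1/(4*(b + real n))) \<longlonglongrightarrow> 0"
    using b by real_asymp
  have wL: "w \<longlonglongrightarrow> L"
    unfolding w_def using tendsto_diff[OF L(1) z] by simp
  have CL: "Cst b = L" unfolding Cst_def using L(1) unfolding u_def by (rule limI)
  show "(\<lambda>n. sfun (b + real n)) \<longlonglongrightarrow> Cst b" using L(1) CL unfolding u_def by simp
  show "\<And>n. 0 \<le> sfun (b + real n) - Cst b" using L(2) CL unfolding u_def by simp
  show "\<And>n. sfun (b + real n) - Cst b \<le> 1/(4*(b + real n))"
    using incseq_le[OF inc wL] CL unfolding w_def u_def by (simp add: algebra_simps)
qed

lemma Gamma_ratio_lim:
  assumes b: "b > 0"
  shows "(\<lambda>n. Gamma (b + real n + 1) / (fact n * exp (b * ln (real n)))) \<longlonglongrightarrow> 1"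
proof -
  have nz: "b \<notin> \<int>\<^sub>\<le>\<^sub>0" using b by (auto elim!: nonpos_Ints_cases)
  have Gb: "Gamma b > 0" using b by (rule Gamma_real_pos)
  have eq: "Gamma (b + real n + 1) / (fact n * exp (b * ln (real n))) = Gamma b / Gamma_series b n" for n
  proof -
    have "pochhammer b (n+1) = Gamma (b + real (n+1)) / Gamma b"
      using pochhammer_Gamma[OF nz] by simp
    moreover have "Gamma (b + real (n+1)) > 0" using b by (intro Gamma_real_pos) simp
    ultimately show ?thesis
      using Gb unfolding Gamma_series_def by (simp add: field_simps add.assoc)
  qed
  have "(\<lambda>n. Gamma b / Gamma_series b n) \<longlonglongrightarrow> Gamma b / Gamma b"
    using Gamma_series_LIMSEQ[of b] Gb by (intro tendsto_intros) auto
  then show ?thesis using Gb by (simp add: eq)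
qed

lemma Cst_const:
  assumes b: "b > 0"
  shows "Cst b = Cst 1"
proof -
  define R where "R c n = Gamma (c + real n + 1) / (fact n * exp (c * ln (real n)))" for c n
  have Rb: "(\<lambda>n. ln (R b n)) \<longlonglongrightarrow> ln 1"
    unfolding R_def by (intro tendsto_ln Gamma_ratio_lim b) auto
  have R1: "(\<lambda>n. ln (R 1 n)) \<longlonglongrightarrow> ln 1"
    unfolding R_def by (intro tendsto_ln Gamma_ratio_lim) auto
  have br: "((\<lambda>n. b * ln (real n) - ln n - (b+n+1/2)*ln(b+n) + (n+3/2)*ln(n+1) + b - 1) \<longlonglongrightarrow> 0)"
    using b by real_asymp
  have lnG: "ln (Gamma (c + real n + 1)) = ln (R c n) + ln (fact n) + c * ln (real n)"
    if c: "c > 0" and n: "n \<ge> 1" for c n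
  proof -
    have G: "Gamma (c + real n + 1) > 0" using c by (intro Gamma_real_pos) simp
    have f: "(fact n :: real) > 0" by simp
    have "Gamma (c + real n + 1) = R c n * (fact n * exp (c * ln (real n)))"
      unfolding R_def using f by simp
    moreover have "R c n > 0" unfolding R_def using G f by simp
    ultimately show ?thesis using f by (simp add: ln_mult_pos)
  qed
  have ev: "eventually (\<lambda>n. sfun (b + real n) - sfun (1 + real n) =
      ln (R b n) - ln (R 1 n) + (b * ln (real n) - ln n - (b+n+1/2)*ln(b+n) + (n+3/2)*ln(n+1) + b - 1)) sequentially"
    using eventually_ge_at_top[of 1]
  proof eventually_elim
    case (elim n)
    have "ln (Gamma (1 + real n + 1)) = ln (R 1 n) + ln (fact n) + 1 * ln (real n)"
      using lnG[of 1 n] elim by simp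
    then show ?case using lnG[of b n] elim b unfolding sfun_def
      by (simp add: algebra_simps)
  qed
  have "(\<lambda>n. sfun (b + real n) - sfun (1 + real n)) \<longlonglongrightarrow> ln 1 - ln 1 + 0"
    by (rule Lim_transform_eventually[OF tendsto_add[OF tendsto_diff[OF Rb R1] br]])
       (use ev in \<open>simp add: eventually_mono\<close>)
  then have "(\<lambda>n. sfun (1 + real n) + (sfun (b + real n) - sfun (1 + real n))) \<longlonglongrightarrow> Cst 1 + 0"
    using sfun_seq(1)[of 1] by (intro tendsto_add) auto
  then have "(\<lambda>n. sfun (b + real n)) \<longlonglongrightarrow> Cst 1" by simp
  then show ?thesis using sfun_seq(1)[OF b] LIMSEQ_unique by blast
qed

lemma sfun_bound:
  assumes a: "a > 0"
  shows "\<bar>sfun a - Cst 1\<bar> \<le> 1/(4*a)"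
proof -
  define n where "n = nat (\<lceil>a\<rceil> - 1)"
  define b where "b = a - real n"
  have "\<lceil>a\<rceil> \<ge> 1" using a by linarith
  then have rn: "real n = real_of_int \<lceil>a\<rceil> - 1" unfolding n_def by simp
  have b: "b > 0" unfolding b_def rn by linarith
  have ab: "a = b + real n" unfolding b_def by simp
  show ?thesis using sfun_seq(2,3)[OF b, of n] Cst_const[OF b] unfolding ab by simp
qed

lemma sfun_lim: "(sfun \<longlongrightarrow> Cst 1) at_top"
proof -
  have "((\<lambda>a. sfun a - Cst 1) \<longlongrightarrow> 0) at_top"
  proof (rule Lim_null_comparison)
    show "\<forall>\<^sub>F a in at_top. norm (sfun a - Cst 1) \<le> 1/(4*a)"
      using eventually_gt_at_top[of 0] by eventually_elim (use sfun_bound in auto)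
    show "((\<lambda>a::real. 1/(4*a)) \<longlongrightarrow> 0) at_top" by real_asymp
  qed
  then show ?thesis by (simp add: LIM_zero_cancel)
qed



lemma Gamma_dup_real:
  assumes a: "a > 0"
  shows "Gamma a * Gamma (a + 1/2) = exp ((1 - 2*a) * ln 2) * sqrt pi * Gamma (2*a)"
proof -
  have n1: "complex_of_real a \<notin> \<int>\<^sub>\<le>\<^sub>0"
    using a by (simp add: of_real_in_nonpos_Ints_iff) (auto elim!: nonpos_Ints_cases)
  have n2: "complex_of_real a + 1/2 \<notin> \<int>\<^sub>\<le>\<^sub>0"
  proof -
    have "complex_of_real a + 1/2 = complex_of_real (a + 1/2)" by simp
    moreover have "a + 1/2 \<notin> \<int>\<^sub>\<le>\<^sub>0" using a by (auto elim!: nonpos_Ints_cases)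
    ultimately show ?thesis by (metis of_real_in_nonpos_Ints_iff)
  qed
  have h2: "complex_of_real a + 1/2 = complex_of_real (a + 1/2)" by simp
  have h3: "2 * complex_of_real a = complex_of_real (2*a)" by simp
  have h5: "(1 - complex_of_real (2*a)) * of_real (ln 2) = complex_of_real ((1 - 2*a) * ln 2)" by simp
  have h4: "(1 - 2 * complex_of_real a) * of_real (ln 2) = complex_of_real ((1 - 2*a) * ln 2)" by simp
  have "Gamma (complex_of_real a) * Gamma (complex_of_real a + 1/2) =
        exp ((1 - 2 * complex_of_real a) * of_real (ln 2)) * of_real (sqrt pi) * Gamma (2 * complex_of_real a)"
    by (rule Gamma_legendre_duplication[OF n1 n2])
  then have "complex_of_real (Gamma a) * complex_of_real (Gamma (a + 1/2)) =
      complex_of_real (exp ((1 - 2*a) * ln 2)) * complex_of_real (sqrt pi) * complex_of_real (Gamma (2*a))"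
    unfolding h2 h3 h4 h5 Gamma_complex_of_real exp_of_real .
  then have "complex_of_real (Gamma a * Gamma (a + 1/2)) =
      complex_of_real (exp ((1 - 2*a) * ln 2) * sqrt pi * Gamma (2*a))"
    by (simp only: of_real_mult)
  then show ?thesis by (simp only: of_real_eq_iff)
qed

lemma Cst_value: "Cst 1 = ln (2*pi) / 2"
proof -
  define k where "k a = (a+1/2)*ln a + (a+1)*ln(a+1/2) + 1/2 + (2*a+1)*ln 2 - (2*a+3/2) * ln(2*a+1)" for a :: real
  have klim: "(k \<longlongrightarrow> -(ln 2/2)) at_top" unfolding k_def by real_asymp
  have rel: "sfun (2*a+1) - sfun a - sfun (a+1/2) = k a - ln (sqrt pi)" if a: "a > 0" for a
  proof -
    have d: "Gamma (a+1) * Gamma (a + 1 + 1/2) = exp ((1 - 2*(a+1)) * ln 2) * sqrt pi * Gamma (2*(a+1))"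
      using Gamma_dup_real[of "a+1"] a by simp
    have g1: "Gamma (a+1) > 0" "Gamma (a+1+1/2) > 0" "Gamma (2*(a+1)) > 0"
      using a by (auto intro!: Gamma_real_pos)
    have "ln (Gamma (a+1) * Gamma (a + 1 + 1/2)) = ln (Gamma (a+1)) + ln (Gamma (a + 1 + 1/2))"
      using g1 by (simp add: ln_mult_pos)
    moreover have "ln (exp ((1 - 2*(a+1)) * ln 2) * sqrt pi * Gamma (2*(a+1))) =
        (1 - 2*(a+1)) * ln 2 + ln (sqrt pi) + ln (Gamma (2*(a+1)))"
      using g1 by (simp add: ln_mult_pos)
    ultimately have L: "ln (Gamma (a+1)) + ln (Gamma (a + 1 + 1/2)) =
        (1 - 2*(a+1)) * ln 2 + ln (sqrt pi) + ln (Gamma (2*(a+1)))"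
      using d by simp
    have e1: "2*a+1+1 = 2*(a+1)" "a + 1/2 + 1 = a + 1 + 1/2" "2*a+1+1/2 = 2*a+3/2" by simp_all
    show ?thesis unfolding sfun_def k_def e1 using L by (simp add: algebra_simps)
  qed
  have f1: "filterlim (\<lambda>a::real. 2*a+1) at_top at_top" by real_asymp
  have f2: "filterlim (\<lambda>a::real. a+1/2) at_top at_top" by real_asymp
  have lim1: "((\<lambda>a. sfun (2*a+1) - sfun a - sfun (a+1/2)) \<longlongrightarrow> Cst 1 - Cst 1 - Cst 1) at_top"
    by (intro tendsto_diff filterlim_compose[OF sfun_lim f1] filterlim_compose[OF sfun_lim f2] sfun_lim)
  have lim2: "((\<lambda>a. sfun (2*a+1) - sfun a - sfun (a+1/2)) \<longlongrightarrow> -(ln 2/2) - ln (sqrt pi)) at_top"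
    by (rule Lim_transform_eventually[OF tendsto_diff[OF klim tendsto_const]])
       (use eventually_gt_at_top[of 0] in \<open>eventually_elim, use rel in auto\<close>)
  have "Cst 1 - Cst 1 - Cst 1 = -(ln 2/2) - ln (sqrt pi)"
    using tendsto_unique[OF _ lim1 lim2] by simp
  moreover have "ln (sqrt pi) = ln pi / 2" by (simp add: ln_sqrt)
  moreover have "ln (2*pi) = ln 2 + ln pi" by (simp add: ln_mult_pos)
  ultimately show ?thesis by simp
qed

lemma stirling_real: "((\<lambda>a. Gamma (a+1) / (a powr (a + 1/2) * exp (-a))) \<longlongrightarrow> sqrt (2*pi)) at_top"
proof -
  have "((\<lambda>a. exp (sfun a)) \<longlongrightarrow> exp (Cst 1)) at_top"
    by (intro tendsto_exp sfun_lim)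
  moreover have "exp (Cst 1) = sqrt (2*pi)"
    unfolding Cst_value by (simp add: powr_half_sqrt[symmetric] powr_def)
  moreover have "eventually (\<lambda>a. exp (sfun a) = Gamma (a+1) / (a powr (a + 1/2) * exp (-a))) at_top"
    using eventually_gt_at_top[of 0]
  proof eventually_elim
    case (elim a)
    have g: "Gamma (a+1) > 0" using elim by (intro Gamma_real_pos) simp
    have "exp (sfun a) = exp (ln (Gamma (a+1)) - ((a+1/2)*ln a) - (-a))" unfolding sfun_def by simp
    also have "\<dots> = exp (ln (Gamma (a+1))) / (exp ((a+1/2) * ln a) * exp (-a))"
      by (simp only: exp_diff) simp
    also have "\<dots> = Gamma (a+1) / (a powr (a+1/2) * exp (-a))"
      using g elim by (simp add: powr_def)
    finally show ?case .
  qed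
  ultimately show ?thesis by (simp add: tendsto_cong)
qed



lemma dens_lower:
  fixes nu t x :: real
  assumes nu: "nu > 0" and t: "t > 0" and a1: "x / nu > 1"
  shows "ennreal (exp (-t) * t powr (x/nu) / ((x/nu) * Gamma (x/nu)))
         \<le> (\<integral>\<^sup>+y. ennreal (gamma_proc_density nu x y) * indicator {..t} y \<partial>lborel)"
proof -
  define a where "a = x / nu"
  have a: "a > 1" using a1 a_def by simp
  have G: "Gamma a > 0" using a by (intro Gamma_real_pos) simp
  define c where "c = exp (-t) / Gamma a"
  have c: "c > 0" unfolding c_def using G by simp
  have "((\<lambda>y. y powr (a-1)) has_integral (t powr (a-1+1) / (a-1+1))) {0..t}"
    using a t by (intro has_integral_powr_from_0) auto
  from has_integral_mult_left[OF this, of c]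
  have "((\<lambda>y. y powr (a-1) * c) has_integral (t powr a / a * c)) {0..t}"
    by simp
  then have I: "(\<integral>\<^sup>+y. ennreal (y powr (a-1) * c) * indicator {0..t} y \<partial>lborel) = ennreal (t powr a / a * c)"
    using c by (intro nn_integral_has_integral_lebesgue') auto
  have "(\<integral>\<^sup>+y. ennreal (y powr (a-1) * c) * indicator {0..t} y \<partial>lborel)
        \<le> (\<integral>\<^sup>+y. ennreal (gamma_proc_density nu x y) * indicator {..t} y \<partial>lborel)"
  proof (intro nn_integral_mono)
    fix y :: real
    show "ennreal (y powr (a-1) * c) * indicator {0..t} y \<le> ennreal (gamma_proc_density nu x y) * indicator {..t} y"
    proof (cases "y \<in> {0<..t}")
      case True
      have "y powr (a-1) * c \<le> y powr (a-1) * exp (-y) / Gamma a"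
        using True G unfolding c_def by (auto simp: divide_right_mono intro!: mult_left_mono)
      then show ?thesis using True unfolding gamma_proc_density_def a_def[symmetric]
        by (auto simp: indicator_def intro!: ennreal_leI)
    next
      case False
      then have "y \<notin> {0..t} \<or> y = 0" by auto
      then show ?thesis by (auto simp: indicator_def)
    qed
  qed
  moreover have "t powr a / a * c = exp (-t) * t powr a / (a * Gamma a)" unfolding c_def by simp
  ultimately show ?thesis using I unfolding a_def by simp
qed

lemma dens_upper:
  fixes nu t x :: real
  assumes nu: "nu > 0" and t: "t > 0" and a1: "x / nu > 1" and at: "x / nu > t"
  shows "(\<integral>\<^sup>+y. ennreal (gamma_proc_density nu x y) * indicator {..t} y \<partial>lborel)
         \<le> ennreal (exp (-t) * t powr (x/nu) / ((x/nu - t) * Gamma (x/nu)))"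
proof -
  define a where "a = x / nu"
  have a: "a > 1" "a > t" using a1 at a_def by simp_all
  have G: "Gamma a > 0" using a by (intro Gamma_real_pos) simp
  define c where "c = exp (-t) * t powr t / Gamma a"
  have c: "c > 0" unfolding c_def using G t by simp
  have "((\<lambda>y. y powr (a-1-t)) has_integral (t powr (a-1-t+1) / (a-1-t+1))) {0..t}"
    using a t by (intro has_integral_powr_from_0) auto
  from has_integral_mult_left[OF this, of c]
  have "((\<lambda>y. y powr (a-1-t) * c) has_integral (t powr (a-t) / (a-t) * c)) {0..t}"
    by simp
  then have I: "(\<integral>\<^sup>+y. ennreal (y powr (a-1-t) * c) * indicator {0..t} y \<partial>lborel) = ennreal (t powr (a-t) / (a-t) * c)"
    using c by (intro nn_integral_has_integral_lebesgue') auto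
  have "(\<integral>\<^sup>+y. ennreal (gamma_proc_density nu x y) * indicator {..t} y \<partial>lborel)
        \<le> (\<integral>\<^sup>+y. ennreal (y powr (a-1-t) * c) * indicator {0..t} y \<partial>lborel)"
  proof (intro nn_integral_mono)
    fix y :: real
    show "ennreal (gamma_proc_density nu x y) * indicator {..t} y \<le> ennreal (y powr (a-1-t) * c) * indicator {0..t} y"
    proof (cases "y \<in> {0<..t}")
      case True
      then have y: "y > 0" "y \<le> t" by auto
      have "ln (y/t) \<le> y/t - 1" using y t by (intro ln_le_minus_one) auto
      then have "t * ln (y/t) \<le> t * (y/t - 1)" using t by (intro mult_left_mono) auto
      then have "t * ln y - y \<le> t * ln t - t" using y t by (simp add: ln_div algebra_simps)
      then have "exp (t * ln y - y) \<le> exp (t * ln t - t)" by simp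
      moreover have "y powr t * exp (-y) = exp (t * ln y - y)"
        using y by (simp add: powr_def exp_add[symmetric])
      moreover have "t powr t * exp (-t) = exp (t * ln t - t)"
        using t by (simp add: powr_def exp_add[symmetric])
      ultimately have e: "y powr t * exp (-y) \<le> t powr t * exp (-t)" by simp
      have "y powr (a-1) = y powr (a-1-t) * y powr t"
        using y by (simp add: powr_add[symmetric])
      then have "y powr (a-1) * exp (-y) = y powr (a-1-t) * (y powr t * exp (-y))" by simp
      also have "\<dots> \<le> y powr (a-1-t) * (t powr t * exp (-t))"
        using e by (intro mult_left_mono) auto
      finally have "y powr (a-1) * exp (-y) / Gamma a \<le> y powr (a-1-t) * c"
        unfolding c_def using G by (simp add: divide_right_mono mult_ac)
      then show ?thesis using y unfolding gamma_proc_density_def a_def[symmetric]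
        by (auto simp: indicator_def intro!: ennreal_leI)
    next
      case False
      then have "y \<notin> {..t} \<or> y \<le> 0" by auto
      then show ?thesis unfolding gamma_proc_density_def by (auto simp: indicator_def)
    qed
  qed
  moreover have "t powr (a-t) / (a-t) * c = exp (-t) * t powr a / ((a - t) * Gamma a)"
  proof -
    have p: "t powr t > 0" using t by simp
    have q: "a - t \<noteq> 0" using a by simp
    show ?thesis unfolding c_def using t p q G by (simp add: powr_diff divide_simps)
  qed
  ultimately show ?thesis using I unfolding a_def by simp
qed



lemma h_rewrite:
  fixes a t :: real assumes a: "a > 0" and t: "t > 0"
  shows "(2 * pi * a) powr (-1/2) * exp (a - t) * (t / a) powr a =
         exp (-t) * t powr a * exp a / (sqrt (2*pi) * a powr (a + 1/2))"
proof -
  have "(2 * pi * a) powr (-1/2) = 1 / (sqrt (2*pi) * a powr (1/2))"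
    using a by (simp add: powr_minus powr_mult powr_half_sqrt divide_simps real_sqrt_mult)
  moreover have "(t / a) powr a = t powr a / a powr a" using a t by (simp add: powr_divide)
  moreover have "exp (a - t) = exp a * exp (-t)" by (simp add: exp_add[symmetric])
  moreover have "a powr (a + 1/2) = a powr a * a powr (1/2)" using a by (simp add: powr_add)
  ultimately show ?thesis using a by (simp add: field_simps)
qed

lemma low_over_h:
  fixes t :: real assumes t: "t > 0"
  shows "((\<lambda>a. (exp (-t) * t powr a / (a * Gamma a)) /
              ((2 * pi * a) powr (-1/2) * exp (a - t) * (t / a) powr a)) \<longlongrightarrow> 1) at_top"
proof -
  have "((\<lambda>a. sqrt (2*pi) / (Gamma (a+1) / (a powr (a + 1/2) * exp (-a)))) \<longlongrightarrow> sqrt (2*pi) / sqrt (2*pi)) at_top"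
    by (intro tendsto_divide tendsto_const stirling_real) auto
  moreover have "eventually (\<lambda>a. sqrt (2*pi) / (Gamma (a+1) / (a powr (a + 1/2) * exp (-a))) =
      (exp (-t) * t powr a / (a * Gamma a)) / ((2 * pi * a) powr (-1/2) * exp (a - t) * (t / a) powr a)) at_top"
    using eventually_gt_at_top[of 0]
  proof eventually_elim
    case (elim a)
    have G: "Gamma a > 0" using elim by (rule Gamma_real_pos)
    have G1: "Gamma (a+1) = a * Gamma a" using elim by (intro Gamma_plus1) (auto elim!: nonpos_Ints_cases)
    have p: "a powr (a + 1/2) > 0" "t powr a > 0" using elim t by auto
    show ?case unfolding h_rewrite[OF elim t] G1 using G p elim
      by (simp add: field_simps exp_minus)
  qed
  ultimately show ?thesis by (simp add: tendsto_cong)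
qed



lemma aux_frac:
  fixes E b t Gm :: real
  assumes "b \<noteq> 0" "b - t \<noteq> 0" "Gm \<noteq> 0"
  shows "E / ((b - t) * Gm) = E / (b * Gm) * (b / (b - t))"
  using assms by (simp add: field_simps)

lemma F_asymp:
  fixes nu t :: real and F :: "real \<Rightarrow> real"
  assumes nu: "nu > 0" and t: "t > 0"
    and ev: "eventually (\<lambda>x. exp (-t) * t powr (x/nu) / ((x/nu) * Gamma (x/nu)) \<le> F x \<and>
                 F x \<le> exp (-t) * t powr (x/nu) / ((x/nu - t) * Gamma (x/nu))) at_top"
  shows "F \<sim>[at_top] (\<lambda>x. (2 * pi * x / nu) powr (-1/2) * exp (x / nu - t) * (nu * t / x) powr (x / nu))"
proof (rule asymp_equivI')
  define L where "L a = exp (-t) * t powr a / (a * Gamma a)" for a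
  define h where "h a = (2 * pi * a) powr (-1/2) * exp (a - t) * (t / a) powr a" for a
  define g where "g x = (2 * pi * x / nu) powr (-1/2) * exp (x / nu - t) * (nu * t / x) powr (x / nu)" for x
  have fl: "filterlim (\<lambda>x::real. x / nu) at_top at_top"
    using nu by real_asymp
  have q: "((\<lambda>x. L (x/nu) / h (x/nu)) \<longlongrightarrow> 1) at_top"
    using filterlim_compose[OF low_over_h[OF t] fl] unfolding L_def h_def .
  have r0: "((\<lambda>a::real. a / (a - t)) \<longlongrightarrow> 1) at_top" by real_asymp
  have r: "((\<lambda>x. L (x/nu) / h (x/nu) * ((x/nu) / (x/nu - t))) \<longlongrightarrow> 1 * 1) at_top"
    using q filterlim_compose[OF r0 fl] by (rule tendsto_mult)
  have gh: "g x = h (x/nu)" if "x > 0" for x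
  proof -
    have e1: "2 * pi * x / nu = 2 * pi * (x/nu)" by simp
    have e2: "nu * t / x = t / (x/nu)" using nu that by simp
    show ?thesis unfolding g_def h_def e1 e2 ..
  qed
  have ev2: "eventually (\<lambda>x. L (x/nu) / h (x/nu) \<le> F x / g x \<and>
       F x / g x \<le> L (x/nu) / h (x/nu) * ((x/nu) / (x/nu - t))) at_top"
    using ev eventually_gt_at_top[of "nu * t"]
  proof eventually_elim
    case (elim x)
    have x: "x/nu > t" "x > 0" using elim(2) nu t by (simp_all add: field_simps) (smt (verit) mult_pos_pos)
    have a: "x / nu > 0" using x t by linarith
    have hp: "h (x/nu) > 0" unfolding h_def using a t x nu by (intro mult_pos_pos) auto
    have G: "Gamma (x/nu) > 0" using a by (rule Gamma_real_pos)
    have U: "exp (-t) * t powr (x/nu) / ((x/nu - t) * Gamma (x/nu)) = L (x/nu) * ((x/nu) / (x/nu - t))"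
      unfolding L_def using a x G by (intro aux_frac; linarith)
    have lo: "L (x/nu) \<le> F x" and up: "F x \<le> L (x/nu) * ((x/nu) / (x/nu - t))"
      using elim(1) U unfolding L_def by auto
    have "L (x/nu) / h (x/nu) \<le> F x / h (x/nu)" using lo hp by (intro divide_right_mono) auto
    moreover have "F x / h (x/nu) \<le> (L (x/nu) * ((x/nu) / (x/nu - t))) / h (x/nu)"
      using up hp by (intro divide_right_mono) auto
    moreover have "(L (x/nu) * ((x/nu) / (x/nu - t))) / h (x/nu) = L (x/nu) / h (x/nu) * ((x/nu) / (x/nu - t))"
      by simp
    ultimately show ?case unfolding gh[OF x(2)] by (simp only:)
  qed
  show "((\<lambda>x. F x / g x) \<longlongrightarrow> 1) at_top"
    by (rule tendsto_sandwich[OF _ _ q]) (use ev2 r in \<open>auto elim: eventually_mono\<close>)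
qed



lemma rc_rat:
  fixes f :: "real \<Rightarrow> real"
  assumes rc: "continuous (at_right s) f" and gt: "f s > c" and e: "e > 0"
  shows "\<exists>q::rat. s < real_of_rat q \<and> real_of_rat q < s + e \<and> f (real_of_rat q) > c"
proof -
  have "(f \<longlongrightarrow> f s) (at_right s)" using rc by (simp add: continuous_within)
  then have "eventually (\<lambda>y. f y > c) (at_right s)" using gt by (rule order_tendstoD(1))
  then obtain b where b: "b > s" "\<And>y. s < y \<Longrightarrow> y < b \<Longrightarrow> f y > c"
    by (auto simp: eventually_at_right_field)
  obtain r where r: "r \<in> \<rat>" "s < r" "r < min b (s + e)"
    using Rats_dense_in_real[of s "min b (s+e)"] b e by auto
  from r(1) obtain q where q: "r = real_of_rat q" by (auto elim: Rats_cases)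
  show ?thesis using r b(2)[of r] q by (intro exI[of _ q]) auto
qed

lemma rc_lt:
  fixes f :: "real \<Rightarrow> real"
  assumes rc: "continuous (at_right s) f" and lt: "f s < c"
  shows "\<exists>d>0. \<forall>y. s \<le> y \<and> y < s + d \<longrightarrow> f y < c"
proof -
  have "(f \<longlongrightarrow> f s) (at_right s)" using rc by (simp add: continuous_within)
  then have "eventually (\<lambda>y. f y < c) (at_right s)" using lt by (rule order_tendstoD(2))
  then obtain b where b: "b > s" "\<And>y. s < y \<Longrightarrow> y < b \<Longrightarrow> f y < c"
    by (auto simp: eventually_at_right_field)
  show ?thesis using b lt by (intro exI[of _ "b - s"]) (auto simp: le_less)
qed

lemma rc_le_rat:
  fixes f :: "real \<Rightarrow> real"
  assumes rc: "continuous (at_right s) f" and sb: "s < b"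
    and le: "\<And>q::rat. s < real_of_rat q \<Longrightarrow> real_of_rat q < b \<Longrightarrow> f (real_of_rat q) \<le> c"
  shows "f s \<le> c"
proof (rule ccontr)
  assume "\<not> f s \<le> c"
  then have "f s > c" by simp
  from rc_rat[OF rc this, of "b - s"] sb obtain q :: rat where "s < real_of_rat q" "real_of_rat q < b" "f (real_of_rat q) > c"
    by auto
  with le[of q] show False by simp
qed

lemma inf_char:
  fixes f :: "real \<Rightarrow> real" and t x :: real
  assumes rc: "\<And>s. s \<ge> 0 \<Longrightarrow> continuous (at_right s) f"
  shows "Inf {\<tau>. \<tau> \<ge> 0 \<and> f \<tau> > t} > x \<longleftrightarrow>
    ((\<not> (\<exists>q::rat. 0 \<le> real_of_rat q \<and> f (real_of_rat q) > t) \<and> Inf ({} :: real set) > x) \<or>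
     ((\<exists>r::rat. real_of_rat r > x \<and> (\<forall>q::rat. 0 \<le> real_of_rat q \<and> real_of_rat q < (real_of_rat r) \<longrightarrow> f (real_of_rat q) \<le> t)) \<and>
      (\<exists>q::rat. 0 \<le> real_of_rat q \<and> f (real_of_rat q) > t)))"
  (is "?L \<longleftrightarrow> ?R")
proof -
  define S where "S = {\<tau>. \<tau> \<ge> 0 \<and> f \<tau> > t}"
  have bdd: "bdd_below S" unfolding S_def by (auto intro: bdd_belowI[of _ 0])
  have ne: "S \<noteq> {} \<longleftrightarrow> (\<exists>q::rat. 0 \<le> real_of_rat q \<and> f (real_of_rat q) > t)"
  proof
    assume "S \<noteq> {}"
    then obtain \<tau> where \<tau>: "\<tau> \<ge> 0" "f \<tau> > t" unfolding S_def by auto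
    from rc_rat[OF rc[OF \<tau>(1)] \<tau>(2), of 1] obtain q :: rat where "\<tau> < real_of_rat q" "f (real_of_rat q) > t" by auto
    then have "0 \<le> real_of_rat q \<and> f (real_of_rat q) > t" using \<tau> by linarith
    then show "\<exists>q::rat. 0 \<le> real_of_rat q \<and> f (real_of_rat q) > t" by blast
  next
    assume "\<exists>q::rat. 0 \<le> real_of_rat q \<and> f (real_of_rat q) > t"
    then obtain q :: rat where "0 \<le> real_of_rat q" "f (real_of_rat q) > t" by blast
    then have "real_of_rat q \<in> S" unfolding S_def by simp
    then show "S \<noteq> {}" by blast
  qed
  show ?thesis
  proof (cases "S = {}")
    case True
    then have nq: "\<not> (\<exists>q::rat. 0 \<le> real_of_rat q \<and> f (real_of_rat q) > t)" using ne by blast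
    show ?thesis unfolding S_def[symmetric] \<open>S = {}\<close> using nq by blast
  next
    case False
    have "?L \<longleftrightarrow> (\<exists>r::rat. real_of_rat r > x \<and> (\<forall>q::rat. 0 \<le> real_of_rat q \<and> real_of_rat q < (real_of_rat r) \<longrightarrow> f (real_of_rat q) \<le> t))"
    proof
      assume L: ?L
      obtain r' where r': "r' \<in> \<rat>" "x < r'" "r' < Inf S"
        using Rats_dense_in_real[of x "Inf S"] L unfolding S_def by auto
      from r'(1) obtain r where r: "r' = real_of_rat r" by (auto elim: Rats_cases)
      have "\<forall>q::rat. 0 \<le> real_of_rat q \<and> real_of_rat q < (real_of_rat r) \<longrightarrow> f (real_of_rat q) \<le> t"
      proof (intro allI impI)
        fix q :: rat assume q: "0 \<le> real_of_rat q \<and> real_of_rat q < (real_of_rat r)"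
        show "f (real_of_rat q) \<le> t"
        proof (rule ccontr)
          assume "\<not> f (real_of_rat q) \<le> t"
          then have "real_of_rat q \<in> S" using q unfolding S_def by auto
          then have "Inf S \<le> real_of_rat q" using bdd by (rule cInf_lower)
          then show False using q r r' by simp
        qed
      qed
      then show "\<exists>r::rat. real_of_rat r > x \<and> (\<forall>q::rat. 0 \<le> real_of_rat q \<and> real_of_rat q < (real_of_rat r) \<longrightarrow> f (real_of_rat q) \<le> t)"
        using r r' by (intro exI[of _ r]) auto
    next
      assume "\<exists>r::rat. real_of_rat r > x \<and> (\<forall>q::rat. 0 \<le> real_of_rat q \<and> real_of_rat q < (real_of_rat r) \<longrightarrow> f (real_of_rat q) \<le> t)"
      then obtain r :: rat where r: "real_of_rat r > x" "\<And>q::rat. 0 \<le> real_of_rat q \<Longrightarrow> real_of_rat q < (real_of_rat r) \<Longrightarrow> f (real_of_rat q) \<le> t"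
        by auto
      have "real_of_rat r \<le> Inf S"
      proof (rule cInf_greatest[OF False])
        fix \<tau> assume \<tau>: "\<tau> \<in> S"
        then have \<tau>0: "\<tau> \<ge> 0" "f \<tau> > t" unfolding S_def by auto
        show "real_of_rat r \<le> \<tau>"
        proof (rule ccontr)
          assume "\<not> real_of_rat r \<le> \<tau>"
          then have "\<tau> < real_of_rat r" by simp
          then have "f \<tau> \<le> t"
          proof (rule rc_le_rat[OF rc[OF \<tau>0(1)]])
            fix q :: rat assume "\<tau> < real_of_rat q" "real_of_rat q < real_of_rat r"
            then show "f (real_of_rat q) \<le> t" using \<tau>0(1) by (intro r(2)) linarith+
          qed
          then show False using \<tau>0 by simp
        qed
      qed
      then show ?L using r(1) unfolding S_def by simp
    qed
    then show ?thesis using False ne unfolding S_def[symmetric] by auto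
  qed
qed



theorem mainTheorem3:
  fixes M :: "'a measure" and nu t :: real and U :: "real \<Rightarrow> 'a \<Rightarrow> real"
  assumes "nu > 0"
    and "gamma_process M nu U"
    and "t > 0"
  shows "(\<lambda>x. measure M {\<omega> \<in> space M. inverse_process U t \<omega> > x})
           \<sim>[at_top] (\<lambda>x. (2 * pi * x / nu) powr (-1/2) * exp (x / nu - t) * (nu * t / x) powr (x / nu))"
proof -
  note nu = assms(1) and t = assms(3)
  note gp = assms(2)[unfolded gamma_process_def]
  interpret P: prob_space M using gp by simp
  have meas[measurable]: "\<And>s. U s \<in> borel_measurable M" using gp by simp
  have rc: "\<And>\<omega> s. \<omega> \<in> space M \<Longrightarrow> s \<ge> 0 \<Longrightarrow> continuous (at_right s) (\<lambda>\<tau>. U \<tau> \<omega>)"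
    using gp by simp
  have incr: "\<And>s h. s \<ge> 0 \<Longrightarrow> h \<ge> 0 \<Longrightarrow> distr M borel (\<lambda>\<omega>. U (s+h) \<omega> - U s \<omega>) = distr M borel (U h)"
    using gp by simp
  have dist: "\<And>x. x > 0 \<Longrightarrow> distributed M lborel (U x) (\<lambda>y. ennreal (gamma_proc_density nu x y))"
    using gp by simp
  define F where "F x = measure M {\<omega> \<in> space M. U x \<omega> \<le> t}" for x
  define g where "g x = (2 * pi * x / nu) powr (-1/2) * exp (x / nu - t) * (nu * t / x) powr (x / nu)" for x

  have Fem: "emeasure M {\<omega> \<in> space M. U x \<omega> \<le> t} =
      (\<integral>\<^sup>+y. ennreal (gamma_proc_density nu x y) * indicator {..t} y \<partial>lborel)" if x: "x > 0" for x
  proof -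
    have "{\<omega> \<in> space M. U x \<omega> \<le> t} = U x -` {..t} \<inter> space M" by auto
    then show ?thesis using distributed_emeasure[OF dist[OF x], of "{..t}"] by simp
  qed
  have Flt: "emeasure M {\<omega> \<in> space M. U x \<omega> < t} = emeasure M {\<omega> \<in> space M. U x \<omega> \<le> t}" if x: "x > 0" for x
  proof -
    have "{\<omega> \<in> space M. U x \<omega> < t} = U x -` {..<t} \<inter> space M" by auto
    then have "emeasure M {\<omega> \<in> space M. U x \<omega> < t} =
        (\<integral>\<^sup>+y. ennreal (gamma_proc_density nu x y) * indicator {..<t} y \<partial>lborel)"
      using distributed_emeasure[OF dist[OF x], of "{..<t}"] by simp
    also have "\<dots> = (\<integral>\<^sup>+y. ennreal (gamma_proc_density nu x y) * indicator {..t} y \<partial>lborel)"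
      by (rule nn_integral_cong_AE) (use AE_lborel_singleton[of t] in \<open>eventually_elim, auto simp: indicator_def\<close>)
    finally show ?thesis using Fem[OF x] by simp
  qed

  have Fb: "eventually (\<lambda>x. exp (-t) * t powr (x/nu) / ((x/nu) * Gamma (x/nu)) \<le> F x \<and>
                 F x \<le> exp (-t) * t powr (x/nu) / ((x/nu - t) * Gamma (x/nu))) at_top"
    using eventually_gt_at_top[of "nu * max 1 t"]
  proof eventually_elim
    case (elim x)
    have m: "nu * 1 \<le> nu * max 1 t" "nu * t \<le> nu * max 1 t" using nu by (intro mult_left_mono; simp)+
    have "nu < x" "nu * t < x" using m elim by linarith+
    then have a: "x / nu > 1" "x / nu > t" using nu by (simp_all add: field_simps)
    have x: "x > 0" using a nu by (smt (verit) divide_nonpos_pos)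
    have G: "Gamma (x/nu) > 0" using a by (intro Gamma_real_pos) simp
    have E: "emeasure M {\<omega> \<in> space M. U x \<omega> \<le> t} = ennreal (F x)"
      unfolding F_def by (rule P.emeasure_eq_measure)
    have "ennreal (exp (-t) * t powr (x/nu) / ((x/nu) * Gamma (x/nu))) \<le> ennreal (F x)"
      using dens_lower[OF nu t a(1)] Fem[OF x] E by simp
    then have lo: "exp (-t) * t powr (x/nu) / ((x/nu) * Gamma (x/nu)) \<le> F x"
      by (subst (asm) ennreal_le_iff) (auto simp: F_def)
    have up0: "exp (-t) * t powr (x/nu) / ((x/nu - t) * Gamma (x/nu)) \<ge> 0" using a G by simp
    have "ennreal (F x) \<le> ennreal (exp (-t) * t powr (x/nu) / ((x/nu - t) * Gamma (x/nu)))"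
      using dens_upper[OF nu t a] Fem[OF x] E by simp
    then have up: "F x \<le> exp (-t) * t powr (x/nu) / ((x/nu - t) * Gamma (x/nu))"
      using up0 by (subst (asm) ennreal_le_iff) auto
    show ?case using lo up by simp
  qed
  have Fg: "F \<sim>[at_top] g" unfolding g_def by (rule F_asymp[OF nu t Fb])
  have g0: "(g \<longlongrightarrow> 0) at_top" unfolding g_def using nu t by real_asymp
  have F0: "(F \<longlongrightarrow> 0) at_top" using tendsto_asymp_equiv_cong[OF Fg] g0 by simp

  define N where "N = {\<omega> \<in> space M. \<not> (\<exists>q::rat. 0 \<le> real_of_rat q \<and> U (real_of_rat q) \<omega> > t)}"
  have Nsets: "N \<in> sets M" unfolding N_def by measurable
  have NF: "measure M N \<le> F (real n)" for n
  proof -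
    have "N \<subseteq> {\<omega> \<in> space M. U (real n) \<omega> \<le> t}"
    proof
      fix \<omega> assume "\<omega> \<in> N"
      then have "\<omega> \<in> space M" "\<not> (0 \<le> real_of_rat (of_nat n) \<and> U (real_of_rat (of_nat n)) \<omega> > t)"
        unfolding N_def by blast+
      then show "\<omega> \<in> {\<omega> \<in> space M. U (real n) \<omega> \<le> t}" by (simp add: of_rat_of_nat_eq)
    qed
    then show ?thesis unfolding F_def by (intro P.finite_measure_mono) auto
  qed
  have "(\<lambda>n. F (real n)) \<longlonglongrightarrow> 0"
    using filterlim_compose[OF F0 filterlim_real_sequentially] .
  then have "measure M N \<le> 0" using NF by (intro LIMSEQ_le_const) auto
  then have eN: "emeasure M N = 0" using P.emeasure_eq_measure[of N] measure_nonneg[of M N] by simp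
  have eqN: "{\<omega> \<in> space M. \<not> (\<exists>q::rat. 0 \<le> real_of_rat q \<and> U (real_of_rat q) \<omega> > t)} = N"
    unfolding N_def ..
  have AEne: "AE \<omega> in M. \<exists>q::rat. 0 \<le> real_of_rat q \<and> U (real_of_rat q) \<omega> > t"
    by (rule iffD2[OF AE_iff_measurable[OF Nsets eqN] eN])

  have AEmono: "AE \<omega> in M. \<forall>q::rat. 0 \<le> real_of_rat q \<and> real_of_rat q \<le> x \<longrightarrow> U (real_of_rat q) \<omega> \<le> U x \<omega>"
    if x: "x > 0" for x
  proof (subst AE_all_countable, intro allI)
    fix q :: rat
    show "AE \<omega> in M. 0 \<le> real_of_rat q \<and> real_of_rat q \<le> x \<longrightarrow> U (real_of_rat q) \<omega> \<le> U x \<omega>"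
    proof (cases "0 \<le> real_of_rat q \<and> real_of_rat q < x")
      case False
      then show ?thesis by (intro AE_I2) auto
    next
      case True
      define s where "s = real_of_rat q"
      define h where "h = x - s"
      have s: "s \<ge> 0" "h > 0" "s + h = x" using True unfolding s_def h_def by auto
      have "emeasure M {\<omega> \<in> space M. U x \<omega> - U s \<omega> < 0} =
            emeasure (distr M borel (\<lambda>\<omega>. U (s+h) \<omega> - U s \<omega>)) {..<0}"
        by (subst emeasure_distr) (auto simp: s(3) intro!: arg_cong[where f="emeasure M"])
      also have "\<dots> = emeasure (distr M borel (U h)) {..<0}" using incr[of s h] s by simp
      also have "\<dots> = emeasure M (U h -` {..<0} \<inter> space M)"
        by (subst emeasure_distr) auto
      also have "\<dots> = (\<integral>\<^sup>+y. ennreal (gamma_proc_density nu h y) * indicator {..<0} y \<partial>lborel)"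
        using distributed_emeasure[OF dist[OF s(2)], of "{..<0}"] by simp
      also have "\<dots> = 0"
      proof -
        have z0: "\<And>y. ennreal (gamma_proc_density nu h y) * indicator {..<0} y = 0"
          by (auto simp: gamma_proc_density_def indicator_def)
        show ?thesis by (simp only: z0) simp
      qed
      finally have z: "emeasure M {\<omega> \<in> space M. U x \<omega> - U s \<omega> < 0} = 0" by simp
      have "AE \<omega> in M. \<not> (U x \<omega> - U s \<omega> < 0)"
        using AE_iff_measurable[of "{\<omega> \<in> space M. U x \<omega> - U s \<omega> < 0}" M "\<lambda>\<omega>. \<not> (U x \<omega> - U s \<omega> < 0)"] z
        by simp
      then show ?thesis by eventually_elim (auto simp: s_def)
    qed
  qed

  define D where "D x = {\<omega> \<in> space M. inverse_process U t \<omega> > x}" for x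
  have Dsets: "D x \<in> sets M" for x
  proof -
    have "D x = {\<omega> \<in> space M.
      ((\<not> (\<exists>q::rat. 0 \<le> real_of_rat q \<and> U (real_of_rat q) \<omega> > t) \<and> Inf ({} :: real set) > x) \<or>
       ((\<exists>r::rat. real_of_rat r > x \<and> (\<forall>q::rat. 0 \<le> real_of_rat q \<and> real_of_rat q < real_of_rat r \<longrightarrow> U (real_of_rat q) \<omega> \<le> t)) \<and>
        (\<exists>q::rat. 0 \<le> real_of_rat q \<and> U (real_of_rat q) \<omega> > t)))}"
      unfolding D_def inverse_process_def
    proof (rule Collect_cong)
      fix \<omega>
      show "(\<omega> \<in> space M \<and> x < Inf {\<tau>. \<tau> \<ge> 0 \<and> U \<tau> \<omega> > t}) \<longleftrightarrow>
        (\<omega> \<in> space M \<and> ((\<not> (\<exists>q::rat. 0 \<le> real_of_rat q \<and> U (real_of_rat q) \<omega> > t) \<and> Inf ({} :: real set) > x) \<or>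
       ((\<exists>r::rat. real_of_rat r > x \<and> (\<forall>q::rat. 0 \<le> real_of_rat q \<and> real_of_rat q < real_of_rat r \<longrightarrow> U (real_of_rat q) \<omega> \<le> t)) \<and>
        (\<exists>q::rat. 0 \<le> real_of_rat q \<and> U (real_of_rat q) \<omega> > t))))"
      proof (cases "\<omega> \<in> space M")
        case True
        have "\<And>s. s \<ge> 0 \<Longrightarrow> continuous (at_right s) (\<lambda>\<tau>. U \<tau> \<omega>)" using rc[OF True] .
        from inf_char[where f="\<lambda>\<tau>. U \<tau> \<omega>" and t=t and x=x, OF this] True show ?thesis by simp
      qed simp
    qed
    also have "\<dots> \<in> sets M" by measurable
    finally show ?thesis .
  qed
  have DF: "measure M (D x) = F x" if x: "x > 0" for x
  proof (rule antisym)
    have "D x \<subseteq> {\<omega> \<in> space M. U x \<omega> \<le> t}"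
    proof
      fix \<omega> assume \<omega>: "\<omega> \<in> D x"
      show "\<omega> \<in> {\<omega> \<in> space M. U x \<omega> \<le> t}"
      proof (rule ccontr)
        assume "\<omega> \<notin> {\<omega> \<in> space M. U x \<omega> \<le> t}"
        then have "x \<in> {\<tau>. \<tau> \<ge> 0 \<and> U \<tau> \<omega> > t}" using \<omega> x unfolding D_def by auto
        moreover have "bdd_below {\<tau>. \<tau> \<ge> 0 \<and> U \<tau> \<omega> > t}" by (auto intro: bdd_belowI[of _ 0])
        ultimately have "inverse_process U t \<omega> \<le> x" unfolding inverse_process_def by (rule cInf_lower)
        then show False using \<omega> unfolding D_def by simp
      qed
    qed
    then show "measure M (D x) \<le> F x" unfolding F_def by (intro P.finite_measure_mono) auto
  next
    have "AE \<omega> in M. \<omega> \<in> {\<omega> \<in> space M. U x \<omega> < t} \<longrightarrow> \<omega> \<in> D x"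
      using AEmono[OF x] AEne
    proof (eventually_elim)
      case (elim \<omega>)
      show ?case
      proof
        assume "\<omega> \<in> {\<omega> \<in> space M. U x \<omega> < t}"
        then have \<omega>: "\<omega> \<in> space M" "U x \<omega> < t" by auto
        obtain d where d: "d > 0" "\<And>y. x \<le> y \<Longrightarrow> y < x + d \<Longrightarrow> U y \<omega> < t"
          using rc_lt[OF rc[OF \<omega>(1)] \<omega>(2)] x by auto
        define S where "S = {\<tau>. \<tau> \<ge> 0 \<and> U \<tau> \<omega> > t}"
        obtain q :: rat where q: "0 \<le> real_of_rat q" "U (real_of_rat q) \<omega> > t" using elim(2) by blast
        have Sne: "S \<noteq> {}" using q unfolding S_def by blast
        have "x + d \<le> Inf S"
        proof (rule cInf_greatest[OF Sne])
          fix \<tau> assume "\<tau> \<in> S"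
          then have \<tau>: "\<tau> \<ge> 0" "U \<tau> \<omega> > t" unfolding S_def by auto
          show "x + d \<le> \<tau>"
          proof (rule ccontr)
            assume nt: "\<not> x + d \<le> \<tau>"
            show False
            proof (cases "\<tau> < x")
              case True
              have "U \<tau> \<omega> \<le> U x \<omega>"
              proof (rule rc_le_rat[OF rc[OF \<omega>(1) \<tau>(1)] True])
                fix r :: rat assume "\<tau> < real_of_rat r" "real_of_rat r < x"
                then have "0 \<le> real_of_rat r \<and> real_of_rat r \<le> x" using \<tau>(1) by linarith
                then show "U (real_of_rat r) \<omega> \<le> U x \<omega>" using elim(1) by blast
              qed
              then show False using \<tau> \<omega> by simp
            next
              case False
              then show False using d(2)[of \<tau>] nt \<tau> by simp
            qed
          qed
        qed
        then have "x < Inf S" using d(1) by linarith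
        then show "\<omega> \<in> D x" unfolding D_def inverse_process_def S_def using \<omega>(1) by simp
      qed
    qed
    then have "emeasure M {\<omega> \<in> space M. U x \<omega> < t} \<le> emeasure M (D x)"
      by (rule emeasure_mono_AE) (rule Dsets)
    then have "emeasure M {\<omega> \<in> space M. U x \<omega> \<le> t} \<le> emeasure M (D x)" using Flt[OF x] by simp
    then show "F x \<le> measure M (D x)"
      unfolding F_def P.emeasure_eq_measure by (simp add: ennreal_le_iff)
  qed
  have "eventually (\<lambda>x. measure M (D x) = F x) at_top"
    using eventually_gt_at_top[of 0] by eventually_elim (rule DF)
  then have "(\<lambda>x. measure M (D x)) \<sim>[at_top] g"
    using Fg asymp_equiv_cong[of _ _ at_top g g] by (auto simp: eventually_mono)
  then show ?thesis unfolding D_def g_def .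
qed

end
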